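(* For $d \ge 1$, let $w_d = \mathbb{P}\{\|X - Y\| \le 1\}$ where $X,Y$ are independent and uniformly distributed on the unit ball of $\mathbb{R}^d$. Then, as $d \to \infty$, $w_d - w_{d+1} \ge d^{-(d+o(d))/2}$. *)

theory Defs
  imports "HOL-Probability.Probability" "HOL-Library.Landau_Symbols"
begin

text \<open>Lebesgue measure on R^d, with R^d represented as functions on the index set {..<d}.\<close>
definition lebR :: "nat \<Rightarrow> (nat \<Rightarrow> real) measure" where
  "lebR d = PiM {..<d} (\<lambda>_. lborel)"

definition eucl_norm :: "nat \<Rightarrow> (nat \<Rightarrow> real) \<Rightarrow> real" where
  "eucl_norm d x = sqrt (\<Sum>i<d. (x i)\<^sup>2)"

definition unit_ballR :: "nat \<Rightarrow> (nat \<Rightarrow> real) set" where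
  "unit_ballR d = {x \<in> space (lebR d). eucl_norm d x \<le> 1}"

definition unif_ball :: "nat \<Rightarrow> (nat \<Rightarrow> real) measure" where
  "unif_ball d = uniform_measure (lebR d) (unit_ballR d)"

definition w :: "nat \<Rightarrow> real" where
  "w d = measure (unif_ball d \<Otimes>\<^sub>M unif_ball d)
           {(x, y) \<in> space (unif_ball d \<Otimes>\<^sub>M unif_ball d).
              eucl_norm d (\<lambda>i. x i - y i) \<le> 1}"

end

theory Submission
  imports Defs
begin

abbreviation LP :: "nat set \<Rightarrow> (nat \<Rightarrow> real) measure" where
  "LP I \<equiv> PiM I (\<lambda>_. lborel)"

lemma PSF: "product_sigma_finite (\<lambda>_::nat. lborel::real measure)"
  by (simp add: product_sigma_finite_def lborel.sigma_finite_measure_axioms)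

lemma update_measurable:
  assumes "i \<in> I" "e \<in> borel_measurable (LP I)"
  shows "(\<lambda>y. y(i := e y)) \<in> LP I \<rightarrow>\<^sub>M LP I"
proof -
  have "(\<lambda>y k. if k = i then e y else y k) \<in> LP I \<rightarrow>\<^sub>M LP I"
    apply (rule measurable_PiM_single')
    using assms by (auto simp: space_PiM PiE_iff extensional_def)
  moreover have "(\<lambda>y k. if k = i then e y else y k) = (\<lambda>y. y(i := e y))"
    by (auto simp: fun_eq_iff)
  ultimately show ?thesis by simp
qed

lemma coord_affine:
  assumes I: "finite I" "i \<in> I" and c: "c \<noteq> 0"
    and f[measurable]: "f \<in> borel_measurable (LP I)"
    and h[measurable]: "h \<in> borel_measurable (LP I)"
    and hi: "\<And>y t. h (y(i:=t)) = h y"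
  shows "ennreal \<bar>c\<bar> * (\<integral>\<^sup>+y. f (y(i := h y + c * y i)) \<partial>LP I) = (\<integral>\<^sup>+y. f y \<partial>LP I)"
proof -
  interpret product_sigma_finite "\<lambda>_::nat. lborel::real measure" by (rule PSF)
  define K where "K = I - {i}"
  have IK: "I = insert i K" "i \<notin> K" "finite K" using I by (auto simp: K_def)
  have T: "(\<lambda>y. y(i := h y + c * y i)) \<in> LP I \<rightarrow>\<^sub>M LP I"
    by (rule update_measurable) (use I in auto)
  have fT: "(\<lambda>y. f (y(i := h y + c * y i))) \<in> borel_measurable (LP I)"
    using measurable_comp[OF T f] by (simp add: comp_def)
  have "ennreal \<bar>c\<bar> * (\<integral>\<^sup>+y. f (y(i := h y + c * y i)) \<partial>LP I) =
        (\<integral>\<^sup>+y. ennreal \<bar>c\<bar> * f (y(i := h y + c * y i)) \<partial>LP I)"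
    using fT by (simp add: nn_integral_cmult)
  also have "\<dots> = (\<integral>\<^sup>+x. (\<integral>\<^sup>+t. ennreal \<bar>c\<bar> * f (x(i := h x + c * t)) \<partial>lborel) \<partial>LP K)"
    using fT unfolding IK(1)
    by (subst product_nn_integral_insert) (auto simp: IK hi)
  also have "\<dots> = (\<integral>\<^sup>+x. ennreal \<bar>c\<bar> * (\<integral>\<^sup>+t. f (x(i := h x + c * t)) \<partial>lborel) \<partial>LP K)"
  proof (rule nn_integral_cong)
    fix x assume x: "x \<in> space (LP K)"
    have m: "(\<lambda>t. f (x(i := t))) \<in> borel_measurable borel"
      using measurable_comp[OF measurable_component_update[OF x IK(2)] f[unfolded IK(1)]]
      by (simp add: comp_def)
    have "(\<lambda>t. f (x(i := h x + c * t))) \<in> borel_measurable lborel"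
      using measurable_comp[OF _ m, of "\<lambda>t. h x + c * t"] by (simp add: comp_def)
    then show "(\<integral>\<^sup>+t. ennreal \<bar>c\<bar> * f (x(i := h x + c * t)) \<partial>lborel) = ennreal \<bar>c\<bar> * (\<integral>\<^sup>+t. f (x(i := h x + c * t)) \<partial>lborel)"
      by (simp add: nn_integral_cmult)
  qed
  also have "\<dots> = (\<integral>\<^sup>+x. (\<integral>\<^sup>+t. f (x(i := t)) \<partial>lborel) \<partial>LP K)"
  proof (rule nn_integral_cong)
    fix x assume x: "x \<in> space (LP K)"
    have m: "(\<lambda>t. f (x(i := t))) \<in> borel_measurable borel"
      using measurable_comp[OF measurable_component_update[OF x IK(2)] f[unfolded IK(1)]]
      by (simp add: comp_def)
    show "ennreal \<bar>c\<bar> * (\<integral>\<^sup>+t. f (x(i := h x + c * t)) \<partial>lborel) = (\<integral>\<^sup>+t. f (x(i := t)) \<partial>lborel)"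
      using nn_integral_real_affine[OF m c, of "h x"] by simp
  qed
  also have "\<dots> = (\<integral>\<^sup>+y. f y \<partial>LP I)"
    unfolding IK(1) using f by (subst product_nn_integral_insert) (auto simp: IK)
  finally show ?thesis .
qed

lemma coord_affine1:
  assumes I: "finite I" "i \<in> I"
    and f[measurable]: "f \<in> borel_measurable (LP I)"
    and h[measurable]: "h \<in> borel_measurable (LP I)"
    and hi: "\<And>y t. h (y(i:=t)) = h y"
  shows "(\<integral>\<^sup>+y. f (y(i := h y + y i)) \<partial>LP I) = (\<integral>\<^sup>+y. f y \<partial>LP I)"
  using coord_affine[OF I _ f h hi, of 1] by simp

lemma comp_update_measurable:
  assumes "i \<in> I" "e \<in> borel_measurable (LP I)" "f \<in> borel_measurable (LP I)"
  shows "(\<lambda>y. f (y(i := e y))) \<in> borel_measurable (LP I)"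
  using measurable_comp[OF update_measurable[OF assms(1,2)] assms(3)] by (simp add: comp_def)

definition affT :: "nat set \<Rightarrow> (nat \<Rightarrow> real) \<Rightarrow> (nat \<Rightarrow> real) \<Rightarrow> (nat \<Rightarrow> real) \<Rightarrow> (nat \<Rightarrow> real)" where
  "affT J a c y = (\<lambda>k. if k \<in> J then a k + c k * y k else y k)"

lemma affT_measurable:
  assumes "J \<subseteq> I"
  shows "affT J a c \<in> LP I \<rightarrow>\<^sub>M LP I"
proof -
  have "(\<lambda>y k. if k \<in> J then a k + c k * y k else y k) \<in> LP I \<rightarrow>\<^sub>M LP I"
    apply (rule measurable_PiM_single')
    using assms by (auto simp: space_PiM PiE_iff extensional_def)
  then show ?thesis unfolding affT_def[abs_def] by simp
qed

lemma multi_affine: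
  assumes I: "finite I" "J \<subseteq> I" and c: "\<And>k. k \<in> J \<Longrightarrow> c k \<noteq> 0"
    and f[measurable]: "f \<in> borel_measurable (LP I)"
  shows "ennreal (\<Prod>k\<in>J. \<bar>c k\<bar>) * (\<integral>\<^sup>+y. f (affT J a c y) \<partial>LP I) = (\<integral>\<^sup>+y. f y \<partial>LP I)"
proof -
  have "finite J" using I finite_subset by blast
  then show ?thesis using I(2) c
  proof (induction J)
    case empty
    have "affT {} a c y = y" for y by (simp add: affT_def)
    then show ?case by simp
  next
    case (insert j J)
    have jI: "j \<in> I" using insert by auto
    have fT: "(\<lambda>y. f (affT J a c y)) \<in> borel_measurable (LP I)"
      using measurable_comp[OF affT_measurable f, of J a c] insert by (simp add: comp_def)
    have eq: "affT (insert j J) a c y = affT J a c (y(j := a j + c j * y j))" for y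
      using insert by (auto simp: affT_def fun_eq_iff)
    have "ennreal (\<Prod>k\<in>insert j J. \<bar>c k\<bar>) * (\<integral>\<^sup>+y. f (affT (insert j J) a c y) \<partial>LP I)
        = ennreal (\<Prod>k\<in>J. \<bar>c k\<bar>) * (ennreal \<bar>c j\<bar> * (\<integral>\<^sup>+y. f (affT J a c (y(j := a j + c j * y j))) \<partial>LP I))"
      using insert by (simp add: eq ennreal_mult' mult_ac prod_nonneg)
    also have "ennreal \<bar>c j\<bar> * (\<integral>\<^sup>+y. f (affT J a c (y(j := a j + c j * y j))) \<partial>LP I) = (\<integral>\<^sup>+y. f (affT J a c y) \<partial>LP I)"
      using coord_affine[OF I(1) jI _ fT, of "c j" "\<lambda>_. a j"] insert by simp
    also have "ennreal (\<Prod>k\<in>J. \<bar>c k\<bar>) * \<dots> = (\<integral>\<^sup>+y. f y \<partial>LP I)"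
      using insert by auto
    finally show ?case .
  qed
qed

definition rotT :: "nat \<Rightarrow> nat \<Rightarrow> real \<Rightarrow> real \<Rightarrow> (nat \<Rightarrow> real) \<Rightarrow> (nat \<Rightarrow> real)" where
  "rotT i j \<alpha> \<beta> y = y(i := \<alpha> * y i - \<beta> * y j, j := \<beta> * y i + \<alpha> * y j)"

lemma rotation_pres:
  assumes I: "finite I" "i \<in> I" "j \<in> I" "i \<noteq> j" and ab: "\<alpha>\<^sup>2 + \<beta>\<^sup>2 = 1"
    and f[measurable]: "f \<in> borel_measurable (LP I)"
  shows "(\<integral>\<^sup>+y. f (rotT i j \<alpha> \<beta> y) \<partial>LP I) = (\<integral>\<^sup>+y. f y \<partial>LP I)"
proof (cases "\<alpha> = -1")
  case True
  then have b: "\<beta> = 0" using ab by (simp add: power2_eq_square)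
  have eq: "rotT i j \<alpha> \<beta> y = affT {i,j} (\<lambda>_. 0) (\<lambda>_. -1) y" for y
    using True b I by (auto simp: rotT_def affT_def fun_eq_iff)
  show ?thesis
    using multi_affine[OF I(1) _ _ f, of "{i,j}" "\<lambda>_. -1" "\<lambda>_. 0"] I unfolding eq by simp
next
  case False
  define t where "t = \<beta> / (1 + \<alpha>)"
  have a1: "1 + \<alpha> \<noteq> 0" using False by linarith
  have bt: "1 - \<beta> * t = \<alpha>"
  proof -
    have "\<beta> * \<beta> = (1 - \<alpha>) * (1 + \<alpha>)" using ab by (simp add: power2_eq_square algebra_simps)
    then have "\<beta> * t = 1 - \<alpha>" using a1 unfolding t_def by (simp add: field_simps)
    then show ?thesis by simp
  qed
  have tb: "t * (1 + \<alpha>) = \<beta>" using a1 unfolding t_def by simp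
  define S1 where "S1 y = y(i := (- t * y j) + y i)" for y
  define S2 where "S2 y = y(j := \<beta> * y i + y j)" for y
  have eq: "rotT i j \<alpha> \<beta> y = S1 (S2 (S1 y))" for y
  proof -
    have "(y i - t * y j) - t * (\<beta> * (y i - t * y j) + y j) = (1 - \<beta> * t) * y i - (t * (1 + (1 - \<beta> * t))) * y j"
      by (simp add: algebra_simps)
    also have "\<dots> = \<alpha> * y i - \<beta> * y j" unfolding bt tb ..
    moreover have "\<beta> * (y i - t * y j) + y j = \<beta> * y i + (1 - \<beta> * t) * y j"
      by (simp add: algebra_simps)
    moreover have "\<dots> = \<beta> * y i + \<alpha> * y j" unfolding bt ..
    ultimately show ?thesis using I(4) by (auto simp: rotT_def S1_def S2_def fun_eq_iff)
  qed
  have mS1: "(\<lambda>y. g (S1 y)) \<in> borel_measurable (LP I)" if "g \<in> borel_measurable (LP I)" for g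
    unfolding S1_def by (rule comp_update_measurable) (use I that in auto)
  have mS2: "(\<lambda>y. g (S2 y)) \<in> borel_measurable (LP I)" if "g \<in> borel_measurable (LP I)" for g
    unfolding S2_def by (rule comp_update_measurable) (use I that in auto)
  have pS1: "(\<integral>\<^sup>+y. g (S1 y) \<partial>LP I) = (\<integral>\<^sup>+y. g y \<partial>LP I)" if "g \<in> borel_measurable (LP I)" for g
    unfolding S1_def by (rule coord_affine1) (use I that in auto)
  have pS2: "(\<integral>\<^sup>+y. g (S2 y) \<partial>LP I) = (\<integral>\<^sup>+y. g y \<partial>LP I)" if "g \<in> borel_measurable (LP I)" for g
    unfolding S2_def by (rule coord_affine1) (use I that in auto)
  show ?thesis unfolding eq
    using pS1[OF mS2[OF mS1[OF f]]] pS2[OF mS1[OF f]] pS1[OF f] by simp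
qed


definition nrm2 :: "nat set \<Rightarrow> (nat \<Rightarrow> real) \<Rightarrow> real" where
  "nrm2 I y = (\<Sum>k\<in>I. (y k)\<^sup>2)"

definition ip :: "nat set \<Rightarrow> (nat \<Rightarrow> real) \<Rightarrow> (nat \<Rightarrow> real) \<Rightarrow> real" where
  "ip I x y = (\<Sum>k\<in>I. x k * y k)"

lemma nrm2_meas[measurable]: "nrm2 I \<in> borel_measurable (LP I)"
  unfolding nrm2_def[abs_def] by measurable

lemma ip_meas[measurable]: "ip I x \<in> borel_measurable (LP I)"
  unfolding ip_def[abs_def] by measurable

lemma nrm2_nonneg: "0 \<le> nrm2 I y" unfolding nrm2_def by (simp add: sum_nonneg)

lemma pres_set:
  assumes T: "T \<in> LP I \<rightarrow>\<^sub>M LP I"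
    and pres: "\<And>f. f \<in> borel_measurable (LP I) \<Longrightarrow> (\<integral>\<^sup>+y. f (T y) \<partial>LP I) = (\<integral>\<^sup>+y. f y \<partial>LP I)"
    and S: "{y \<in> space (LP I). Q y} \<in> sets (LP I)"
  shows "emeasure (LP I) {y \<in> space (LP I). Q (T y)} = emeasure (LP I) {y \<in> space (LP I). Q y}"
proof -
  let ?S = "{y \<in> space (LP I). Q y}"
  have sp: "T y \<in> space (LP I)" if "y \<in> space (LP I)" for y
    using T that by (auto simp: measurable_def)
  have S2: "{y \<in> space (LP I). Q (T y)} = T -` ?S \<inter> space (LP I)" using sp by auto
  have S2s: "{y \<in> space (LP I). Q (T y)} \<in> sets (LP I)"
    unfolding S2 using T S by (rule measurable_sets)
  have "emeasure (LP I) {y \<in> space (LP I). Q (T y)} = (\<integral>\<^sup>+y. indicator {y \<in> space (LP I). Q (T y)} y \<partial>LP I)"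
    using S2s by simp
  also have "\<dots> = (\<integral>\<^sup>+y. indicator ?S (T y) \<partial>LP I)"
    by (rule nn_integral_cong) (auto simp: indicator_def sp)
  also have "\<dots> = (\<integral>\<^sup>+y. indicator ?S y \<partial>LP I)"
    by (rule pres) (use S in simp)
  also have "\<dots> = emeasure (LP I) ?S" using S by simp
  finally show ?thesis .
qed

lemma sum_two:
  assumes "finite I" "i \<in> I" "j \<in> I" "i \<noteq> j"
  shows "(\<Sum>k\<in>I. g k) = g i + g j + (\<Sum>k\<in>I - {i, j}. g k)"
proof -
  have "(\<Sum>k\<in>I. g k) = g i + (\<Sum>k\<in>I - {i}. g k)" using assms by (simp add: sum.remove)
  also have "(\<Sum>k\<in>I - {i}. g k) = g j + (\<Sum>k\<in>I - {i} - {j}. g k)"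
    using assms by (subst sum.remove) auto
  also have "I - {i} - {j} = I - {i, j}" by auto
  finally show ?thesis by (simp add: add.assoc)
qed

lemma rotT_measurable:
  assumes "i \<in> I" "j \<in> I"
  shows "rotT i j \<alpha> \<beta> \<in> LP I \<rightarrow>\<^sub>M LP I"
proof -
  have "(\<lambda>y k. if k = j then \<beta> * y i + \<alpha> * y j else if k = i then \<alpha> * y i - \<beta> * y j else y k) \<in> LP I \<rightarrow>\<^sub>M LP I"
    apply (rule measurable_PiM_single')
    using assms by (auto simp: space_PiM PiE_iff extensional_def)
  moreover have "(\<lambda>y k. if k = j then \<beta> * y i + \<alpha> * y j else if k = i then \<alpha> * y i - \<beta> * y j else y k) = rotT i j \<alpha> \<beta>"
    by (auto simp: fun_eq_iff rotT_def)
  ultimately show ?thesis by simp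
qed

lemma rot_set:
  assumes I: "finite I" "i \<in> I" "j \<in> I" "i \<noteq> j" and ab: "\<alpha>\<^sup>2 + \<beta>\<^sup>2 = 1"
    and S: "{y \<in> space (LP I). Q y} \<in> sets (LP I)"
  shows "emeasure (LP I) {y \<in> space (LP I). Q (rotT i j \<alpha> \<beta> y)} = emeasure (LP I) {y \<in> space (LP I). Q y}"
  by (rule pres_set[OF rotT_measurable rotation_pres S]) (use assms in auto)

lemma flip_set:
  assumes I: "finite I" "i \<in> I"
    and S: "{y \<in> space (LP I). Q y} \<in> sets (LP I)"
  shows "emeasure (LP I) {y \<in> space (LP I). Q (y(i := - y i))} = emeasure (LP I) {y \<in> space (LP I). Q y}"
proof -
  have eq: "y(i := - y i) = affT {i} (\<lambda>_. 0) (\<lambda>_. -1) y" for y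
    by (auto simp: affT_def fun_eq_iff)
  show ?thesis unfolding eq
    apply (rule pres_set[OF affT_measurable _ S])
    using multi_affine[OF I(1), of "{i}" "\<lambda>_. -1"] I by auto
qed


lemma nrm2_flip: "i \<in> I \<Longrightarrow> finite I \<Longrightarrow> nrm2 I (y(i := - y i)) = nrm2 I y"
  unfolding nrm2_def by (rule sum.cong) auto

lemma rotn_aux:
  assumes I: "finite I" "i0 \<in> I" and A[measurable]: "A \<in> sets borel"
  shows "finite J \<Longrightarrow> J \<subseteq> I - {i0} \<Longrightarrow> (\<forall>k \<in> I - insert i0 J. x k = 0) \<Longrightarrow>
    emeasure (LP I) {y \<in> space (LP I). nrm2 I y \<le> r \<and> ip I x y \<in> A} =
    emeasure (LP I) {y \<in> space (LP I). nrm2 I y \<le> r \<and> sqrt (nrm2 I x) * y i0 \<in> A}"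
proof (induction J arbitrary: x rule: finite_induct)
  case empty
  have ipx: "ip I x y = x i0 * y i0" for y
  proof -
    have "ip I x y = x i0 * y i0 + (\<Sum>k\<in>I - {i0}. x k * y k)"
      unfolding ip_def using I by (simp add: sum.remove)
    also have "(\<Sum>k\<in>I - {i0}. x k * y k) = 0" using empty by (intro sum.neutral) auto
    finally show ?thesis by simp
  qed
  have nx: "nrm2 I x = (x i0)\<^sup>2"
  proof -
    have "nrm2 I x = (x i0)\<^sup>2 + (\<Sum>k\<in>I - {i0}. (x k)\<^sup>2)"
      unfolding nrm2_def using I by (simp add: sum.remove)
    also have "(\<Sum>k\<in>I - {i0}. (x k)\<^sup>2) = 0" using empty by (intro sum.neutral) auto
    finally show ?thesis by simp
  qed
  show ?case
  proof (cases "x i0 \<ge> 0")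
    case True
    then show ?thesis by (simp add: ipx nx)
  next
    case False
    have "emeasure (LP I) {y \<in> space (LP I). nrm2 I (y(i0 := - y i0)) \<le> r \<and> x i0 * (y(i0 := - y i0)) i0 \<in> A}
       = emeasure (LP I) {y \<in> space (LP I). nrm2 I y \<le> r \<and> x i0 * y i0 \<in> A}"
      by (rule flip_set[OF I, where Q="\<lambda>y. nrm2 I y \<le> r \<and> x i0 * y i0 \<in> A"]) (use I in measurable)
    moreover have "x i0 * (- y i0) = sqrt (nrm2 I x) * y i0" for y using False by (simp add: nx)
    ultimately show ?thesis by (simp add: ipx nrm2_flip I)
  qed
next
  case (insert j J)
  have j: "j \<in> I" "j \<noteq> i0" using insert by auto
  define \<rho> where "\<rho> = sqrt ((x i0)\<^sup>2 + (x j)\<^sup>2)"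
  show ?case
  proof (cases "\<rho> = 0")
    case True
    then have "x j = 0" unfolding \<rho>_def by (simp add: add_nonneg_eq_0_iff)
    then have "\<forall>k\<in>I - insert i0 J. x k = 0" using insert by auto
    then show ?thesis using insert by auto
  next
    case False
    have rpos: "\<rho> > 0" using False unfolding \<rho>_def by (simp add: sum_power2_gt_zero_iff)
    have rsq: "\<rho>\<^sup>2 = (x i0)\<^sup>2 + (x j)\<^sup>2" unfolding \<rho>_def by simp
    define \<alpha> where "\<alpha> = x i0 / \<rho>"
    define \<beta> where "\<beta> = x j / \<rho>"
    have ab: "\<alpha>\<^sup>2 + \<beta>\<^sup>2 = 1"
    proof -
      have "\<alpha>\<^sup>2 + \<beta>\<^sup>2 = ((x i0)\<^sup>2 + (x j)\<^sup>2) / \<rho>\<^sup>2"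
        unfolding \<alpha>_def \<beta>_def by (simp add: power_divide add_divide_distrib)
      then show ?thesis using rpos by (simp add: rsq[symmetric])
    qed
    define x' where "x' = x(i0 := \<rho>, j := 0)"
    have x'supp: "\<forall>k\<in>I - insert i0 J. x' k = 0" using insert unfolding x'_def by auto
    have rest: "(\<Sum>k\<in>I - {i0, j}. g (x' k) k) = (\<Sum>k\<in>I - {i0, j}. g (x k) k)" for g :: "real \<Rightarrow> nat \<Rightarrow> real"
      unfolding x'_def by (rule sum.cong) auto
    have nx': "nrm2 I x' = nrm2 I x"
      unfolding nrm2_def sum_two[OF I j(1) j(2)[symmetric]]
      using rest[of "\<lambda>a k. a\<^sup>2"] j rsq by (simp add: x'_def)
    have key1: "x i0 * (\<alpha> * y i0 - \<beta> * y j) + x j * (\<beta> * y i0 + \<alpha> * y j) = \<rho> * y i0" for y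
    proof -
      have "x i0 * (\<alpha> * y i0 - \<beta> * y j) + x j * (\<beta> * y i0 + \<alpha> * y j) = ((x i0)\<^sup>2 + (x j)\<^sup>2) / \<rho> * y i0"
        unfolding \<alpha>_def \<beta>_def by (simp add: field_simps power2_eq_square add_divide_distrib)
      also have "\<dots> = \<rho> * y i0" unfolding rsq[symmetric] using rpos by (simp add: power2_eq_square)
      finally show ?thesis .
    qed
    have ipr: "ip I x (rotT i0 j \<alpha> \<beta> y) = ip I x' y" for y
    proof -
      have "ip I x (rotT i0 j \<alpha> \<beta> y) = x i0 * (\<alpha> * y i0 - \<beta> * y j) + x j * (\<beta> * y i0 + \<alpha> * y j) + (\<Sum>k\<in>I - {i0, j}. x k * y k)"
        unfolding ip_def sum_two[OF I j(1) j(2)[symmetric]] using j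
        by (auto simp: rotT_def intro!: sum.cong)
      also have "\<dots> = ip I x' y"
        unfolding ip_def sum_two[OF I j(1) j(2)[symmetric]] key1 using rest[of "\<lambda>a k. a * y k"] j
        by (simp add: x'_def)
      finally show ?thesis .
    qed
    have nr: "nrm2 I (rotT i0 j \<alpha> \<beta> y) = nrm2 I y" for y
    proof -
      have "nrm2 I (rotT i0 j \<alpha> \<beta> y) = (\<alpha> * y i0 - \<beta> * y j)\<^sup>2 + (\<beta> * y i0 + \<alpha> * y j)\<^sup>2 + (\<Sum>k\<in>I - {i0, j}. (y k)\<^sup>2)"
        unfolding nrm2_def sum_two[OF I j(1) j(2)[symmetric]] using j
        by (auto simp: rotT_def intro!: sum.cong)
      also have "(\<alpha> * y i0 - \<beta> * y j)\<^sup>2 + (\<beta> * y i0 + \<alpha> * y j)\<^sup>2 = (\<alpha>\<^sup>2 + \<beta>\<^sup>2) * ((y i0)\<^sup>2 + (y j)\<^sup>2)"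
        by (simp add: power2_eq_square algebra_simps)
      also have "\<dots> = (y i0)\<^sup>2 + (y j)\<^sup>2" using ab by simp
      finally show ?thesis
        unfolding nrm2_def sum_two[OF I j(1) j(2)[symmetric]] by simp
    qed
    have "emeasure (LP I) {y \<in> space (LP I). nrm2 I y \<le> r \<and> ip I x y \<in> A}
       = emeasure (LP I) {y \<in> space (LP I). nrm2 I (rotT i0 j \<alpha> \<beta> y) \<le> r \<and> ip I x (rotT i0 j \<alpha> \<beta> y) \<in> A}"
      by (rule rot_set[OF I(1,2) j(1) j(2)[symmetric] ab, symmetric]) measurable
    also have "\<dots> = emeasure (LP I) {y \<in> space (LP I). nrm2 I y \<le> r \<and> ip I x' y \<in> A}"
      by (simp add: nr ipr)
    also have "\<dots> = emeasure (LP I) {y \<in> space (LP I). nrm2 I y \<le> r \<and> sqrt (nrm2 I x') * y i0 \<in> A}"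
      using insert.IH[of x'] insert.prems x'supp by auto
    finally show ?thesis by (simp add: nx')
  qed
qed

lemma rotn:
  assumes I: "finite I" "i0 \<in> I" and A[measurable]: "A \<in> sets borel"
  shows "emeasure (LP I) {y \<in> space (LP I). nrm2 I y \<le> r \<and> ip I x y \<in> A} =
    emeasure (LP I) {y \<in> space (LP I). nrm2 I y \<le> r \<and> sqrt (nrm2 I x) * y i0 \<in> A}"
  by (rule rotn_aux[OF I A, of "I - {i0}"]) (use I in auto)


lemma aff_set:
  assumes I: "finite I" "J \<subseteq> I" and c: "\<And>k. k \<in> J \<Longrightarrow> c k \<noteq> 0"
    and S: "{y \<in> space (LP I). Q y} \<in> sets (LP I)"
  shows "ennreal (\<Prod>k\<in>J. \<bar>c k\<bar>) * emeasure (LP I) {y \<in> space (LP I). Q (affT J a c y)} = emeasure (LP I) {y \<in> space (LP I). Q y}"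
proof -
  let ?S = "{y \<in> space (LP I). Q y}"
  note T = affT_measurable[OF I(2), of a c]
  have sp: "affT J a c y \<in> space (LP I)" if "y \<in> space (LP I)" for y
    using T that by (auto simp: measurable_def)
  have S2: "{y \<in> space (LP I). Q (affT J a c y)} = affT J a c -` ?S \<inter> space (LP I)" using sp by auto
  have S2s: "{y \<in> space (LP I). Q (affT J a c y)} \<in> sets (LP I)"
    unfolding S2 using T S by (rule measurable_sets)
  have "emeasure (LP I) {y \<in> space (LP I). Q (affT J a c y)} = (\<integral>\<^sup>+y. indicator {y \<in> space (LP I). Q (affT J a c y)} y \<partial>LP I)"
    using S2s by simp
  also have "\<dots> = (\<integral>\<^sup>+y. indicator ?S (affT J a c y) \<partial>LP I)"
    by (rule nn_integral_cong) (auto simp: indicator_def sp)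
  finally have "ennreal (\<Prod>k\<in>J. \<bar>c k\<bar>) * emeasure (LP I) {y \<in> space (LP I). Q (affT J a c y)} = (\<integral>\<^sup>+y. indicator ?S y \<partial>LP I)"
    using multi_affine[OF I c, where f="indicator ?S" and a=a] S by simp
  also have "\<dots> = emeasure (LP I) ?S" using S by simp
  finally show ?thesis .
qed

definition V :: "nat set \<Rightarrow> ennreal" where
  "V I = emeasure (LP I) {y \<in> space (LP I). nrm2 I y \<le> 1}"

lemma ball_scale:
  assumes I: "finite I" and s: "s > 0"
  shows "emeasure (LP I) {y \<in> space (LP I). nrm2 I y \<le> s\<^sup>2} = ennreal (s ^ card I) * V I"
proof -
  have n: "nrm2 I (affT I (\<lambda>_. 0) (\<lambda>_. s) y) = s\<^sup>2 * nrm2 I y" for y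
    unfolding nrm2_def affT_def by (simp add: sum_distrib_left power_mult_distrib)
  have "ennreal (\<Prod>k\<in>I. \<bar>s\<bar>) * emeasure (LP I) {y \<in> space (LP I). nrm2 I (affT I (\<lambda>_. 0) (\<lambda>_. s) y) \<le> s\<^sup>2}
     = emeasure (LP I) {y \<in> space (LP I). nrm2 I y \<le> s\<^sup>2}"
    by (rule aff_set) (use I s in auto)
  moreover have "{y \<in> space (LP I). nrm2 I (affT I (\<lambda>_. 0) (\<lambda>_. s) y) \<le> s\<^sup>2} = {y \<in> space (LP I). nrm2 I y \<le> 1}"
    using s by (simp add: n)
  ultimately show ?thesis using s by (simp add: V_def)
qed

lemma hyper_null:
  assumes I: "finite I" "i0 \<in> I"
  shows "{y \<in> space (LP I). y i0 = c} \<in> null_sets (LP I)"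
proof -
  interpret product_sigma_finite "\<lambda>_::nat. lborel::real measure" by (rule PSF)
  let ?B = "PiE I (\<lambda>k. if k = i0 then {c} else UNIV)"
  have B: "?B \<in> sets (LP I)" by (rule sets_PiM_I_finite) (use I in auto)
  have "emeasure (LP I) ?B = (\<Prod>k\<in>I. emeasure lborel (if k = i0 then {c} else UNIV))"
    by (rule emeasure_PiM) (use I in auto)
  also have "\<dots> = 0" using I by (intro prod_zero bexI[of _ i0]) auto
  finally have "?B \<in> null_sets (LP I)" using B by auto
  moreover have "{y \<in> space (LP I). y i0 = c} \<subseteq> ?B" by (auto simp: space_PiM)
  moreover have "{y \<in> space (LP I). y i0 = c} \<in> sets (LP I)" using I by measurable
  ultimately show ?thesis by (blast intro: null_sets_subset)
qed

lemma V_finite: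
  assumes I: "finite I"
  shows "V I < \<infinity>"
proof -
  interpret product_sigma_finite "\<lambda>_::nat. lborel::real measure" by (rule PSF)
  let ?B = "PiE I (\<lambda>k. {-1..1::real})"
  have "emeasure (LP I) ?B = (\<Prod>k\<in>I. emeasure lborel {-1..1::real})"
    by (rule emeasure_PiM) (use I in auto)
  also have "\<dots> < \<infinity>" by (simp add: ennreal_prod_eq_top less_top[symmetric] power_eq_top_ennreal)
  finally have fin: "emeasure (LP I) ?B < \<infinity>" .
  have "{y \<in> space (LP I). nrm2 I y \<le> 1} \<subseteq> ?B"
  proof
    fix y assume y: "y \<in> {y \<in> space (LP I). nrm2 I y \<le> 1}"
    have "(y k)\<^sup>2 \<le> 1" if k: "k \<in> I" for k
    proof -
      have "(y k)\<^sup>2 \<le> nrm2 I y" unfolding nrm2_def using I k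
        by (intro member_le_sum) auto
      then show ?thesis using y by auto
    qed
    then have "\<bar>y k\<bar> \<le> 1" if "k \<in> I" for k using that abs_le_square_iff[of "y k" 1] by simp
    then show "y \<in> ?B" using y by (auto simp: space_PiM PiE_iff abs_le_iff)
  qed
  then have "V I \<le> emeasure (LP I) ?B" unfolding V_def
    by (intro emeasure_mono) (use I in \<open>auto intro!: sets_PiM_I_finite\<close>)
  then show ?thesis using fin by simp
qed

lemma V_pos:
  assumes I: "finite I"
  shows "V I > 0"
proof -
  interpret product_sigma_finite "\<lambda>_::nat. lborel::real measure" by (rule PSF)
  define e where "e = 1 / (real (card I) + 1)"
  have e: "e > 0" "e \<le> 1" unfolding e_def by auto
  let ?B = "PiE I (\<lambda>k. {-e..e})"
  have "emeasure (LP I) ?B = (\<Prod>k\<in>I. emeasure lborel {-e..e})"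
    by (rule emeasure_PiM) (use I in auto)
  also have "\<dots> > 0" using e I by (simp add: ennreal_power)
  finally have pos: "emeasure (LP I) ?B > 0" .
  have "?B \<subseteq> {y \<in> space (LP I). nrm2 I y \<le> 1}"
  proof
    fix y assume y: "y \<in> ?B"
    have "(y k)\<^sup>2 \<le> e\<^sup>2" if "k \<in> I" for k
      using y that abs_le_square_iff[of "y k" e] e by (auto simp: PiE_iff abs_le_iff)
    then have "nrm2 I y \<le> (\<Sum>k\<in>I. e\<^sup>2)" unfolding nrm2_def by (intro sum_mono) auto
    also have "\<dots> = real (card I) * e\<^sup>2" by simp
    also have "\<dots> \<le> 1"
    proof -
      have "real (card I) * e \<le> 1" unfolding e_def by (simp add: field_simps)
      moreover have "e\<^sup>2 \<le> e" using e by (simp add: power2_eq_square mult_le_cancel_left1)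
      ultimately show ?thesis
        by (meson dual_order.trans mult_left_mono of_nat_0_le_iff)
    qed
    finally show "y \<in> {y \<in> space (LP I). nrm2 I y \<le> 1}" using y by (auto simp: space_PiM)
  qed
  then have "emeasure (LP I) ?B \<le> V I" unfolding V_def
    by (intro emeasure_mono) (use I in measurable)
  then show ?thesis using pos by simp
qed


definition qf :: "nat \<Rightarrow> real \<Rightarrow> real" where
  "qf m t = (if \<bar>t\<bar> \<le> 1 then sqrt (1 - t\<^sup>2) ^ m else 0)"

lemma qf_meas[measurable]: "qf m \<in> borel_measurable borel"
  unfolding qf_def[abs_def] by measurable

lemma qf_nonneg: "qf m t \<ge> 0" unfolding qf_def using abs_square_le_1[of t] by auto

lemma slice_meas:
  assumes K: "finite K" "K \<noteq> {}"
  shows "emeasure (LP K) {x \<in> space (LP K). nrm2 K x \<le> 1 - t\<^sup>2} = ennreal (qf (card K) t) * V K"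
proof (cases "\<bar>t\<bar> < 1")
  case True
  define s where "s = sqrt (1 - t\<^sup>2)"
  have t2: "t\<^sup>2 < 1" using True by (simp add: abs_square_less_1)
  have s: "s > 0" "s\<^sup>2 = 1 - t\<^sup>2" unfolding s_def using t2 by auto
  show ?thesis using ball_scale[OF K(1) s(1)] True unfolding s(2) by (simp add: qf_def s_def)
next
  case False
  have q: "qf (card K) t = 0" using False K by (auto simp: qf_def abs_square_eq_1 card_gt_0_iff)
  show ?thesis
  proof (cases "\<bar>t\<bar> = 1")
    case True
    obtain i where i: "i \<in> K" using K by auto
    have "{x \<in> space (LP K). nrm2 K x \<le> 1 - t\<^sup>2} \<subseteq> {y \<in> space (LP K). y i = 0}"
    proof safe
      fix x assume "x \<in> space (LP K)" "nrm2 K x \<le> 1 - t\<^sup>2"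
      moreover have "t\<^sup>2 = 1" using True abs_square_eq_1 by blast
      ultimately have "nrm2 K x \<le> 0" by simp
      moreover have "(x i)\<^sup>2 \<le> nrm2 K x" unfolding nrm2_def using K i by (intro member_le_sum) auto
      ultimately show "x i = 0" by (smt (verit) zero_le_power2 power_eq_0_iff zero_neq_numeral)
    qed
    then have "emeasure (LP K) {x \<in> space (LP K). nrm2 K x \<le> 1 - t\<^sup>2} = 0"
    proof -
      have "{x \<in> space (LP K). nrm2 K x \<le> 1 - t\<^sup>2} \<in> sets (LP K)" by measurable
      have "{x \<in> space (LP K). nrm2 K x \<le> 1 - t\<^sup>2} \<in> null_sets (LP K)" using null_sets_subset[OF hyper_null[OF K(1) i, of 0]] \<open>{x \<in> space (LP K). nrm2 K x \<le> 1 - t\<^sup>2} \<in> sets (LP K)\<close> \<open>{x \<in> space (LP K). nrm2 K x \<le> 1 - t\<^sup>2} \<subseteq> _\<close> by blast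
      then show ?thesis by auto
    qed
    then show ?thesis using q by simp
  next
    case False
    have "\<not> t\<^sup>2 < 1" using \<open>\<not> \<bar>t\<bar> < 1\<close> abs_square_less_1 by blast
    moreover have "t\<^sup>2 \<noteq> 1" using False abs_square_eq_1 by blast
    ultimately have neg: "1 - t\<^sup>2 < 0" by linarith
    have h: "\<not> nrm2 K x \<le> 1 - t\<^sup>2" for x using nrm2_nonneg[of K x] neg by linarith
    then have "{x \<in> space (LP K). nrm2 K x \<le> 1 - t\<^sup>2} = {}" by auto
    then show ?thesis using q h by simp
  qed
qed

lemma nrm2_insert:
  assumes "finite K" "i0 \<notin> K"
  shows "nrm2 (insert i0 K) (x(i0 := t)) = t\<^sup>2 + nrm2 K x"
  unfolding nrm2_def using assms by (auto intro!: sum.cong)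

lemma slice_int:
  assumes K: "finite K" "K \<noteq> {}" "i0 \<notin> K" and g[measurable]: "g \<in> borel_measurable borel"
  shows "(\<integral>\<^sup>+y. indicator {y \<in> space (LP (insert i0 K)). nrm2 (insert i0 K) y \<le> 1} y * g (y i0) \<partial>LP (insert i0 K))
       = V K * (\<integral>\<^sup>+t. g t * ennreal (qf (card K) t) \<partial>lborel)"
proof -
  interpret product_sigma_finite "\<lambda>_::nat. lborel::real measure" by (rule PSF)
  have "(\<integral>\<^sup>+y. indicator {y \<in> space (LP (insert i0 K)). nrm2 (insert i0 K) y \<le> 1} y * g (y i0) \<partial>LP (insert i0 K))
     = (\<integral>\<^sup>+t. (\<integral>\<^sup>+x. indicator {y \<in> space (LP (insert i0 K)). nrm2 (insert i0 K) y \<le> 1} (x(i0 := t)) * g ((x(i0 := t)) i0) \<partial>LP K) \<partial>lborel)"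
    by (rule product_nn_integral_insert_rev) (use K in measurable)
  also have "\<dots> = (\<integral>\<^sup>+t. g t * emeasure (LP K) {x \<in> space (LP K). nrm2 K x \<le> 1 - t\<^sup>2} \<partial>lborel)"
  proof (rule nn_integral_cong)
    fix t :: real
    have "(\<integral>\<^sup>+x. indicator {y \<in> space (LP (insert i0 K)). nrm2 (insert i0 K) y \<le> 1} (x(i0 := t)) * g ((x(i0 := t)) i0) \<partial>LP K)
        = (\<integral>\<^sup>+x. g t * indicator {x \<in> space (LP K). nrm2 K x \<le> 1 - t\<^sup>2} x \<partial>LP K)"
      by (rule nn_integral_cong) (use K in \<open>auto simp: indicator_def nrm2_insert space_PiM PiE_iff extensional_def\<close>)
    also have "\<dots> = g t * emeasure (LP K) {x \<in> space (LP K). nrm2 K x \<le> 1 - t\<^sup>2}"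
      by (rule nn_integral_cmult_indicator) measurable
    finally show "(\<integral>\<^sup>+x. indicator {y \<in> space (LP (insert i0 K)). nrm2 (insert i0 K) y \<le> 1} (x(i0 := t)) * g ((x(i0 := t)) i0) \<partial>LP K)
        = g t * emeasure (LP K) {x \<in> space (LP K). nrm2 K x \<le> 1 - t\<^sup>2}" .
  qed
  also have "\<dots> = (\<integral>\<^sup>+t. V K * (g t * ennreal (qf (card K) t)) \<partial>lborel)"
    by (rule nn_integral_cong) (simp add: slice_meas[OF K(1,2)] mult_ac)
  also have "\<dots> = V K * (\<integral>\<^sup>+t. g t * ennreal (qf (card K) t) \<partial>lborel)"
    by (rule nn_integral_cmult) measurable
  finally show ?thesis .
qed


lemma nrm2_diff: "nrm2 I (\<lambda>k. x k - y k) = nrm2 I x - 2 * ip I x y + nrm2 I y"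
  unfolding nrm2_def ip_def by (simp add: power2_diff sum.distrib sum_subtractf sum_distrib_left mult.assoc)

lemma nrm2_diff_meas[measurable]: "(\<lambda>y. nrm2 I (\<lambda>k. x k - y k)) \<in> borel_measurable (LP I)"
  unfolding nrm2_diff by measurable

lemma reflect_set:
  assumes I: "finite I" and S: "{y \<in> space (LP I). Q y} \<in> sets (LP I)"
    and Q: "\<And>y z. (\<forall>k\<in>I. y k = z k) \<Longrightarrow> Q y = Q z"
  shows "emeasure (LP I) {y \<in> space (LP I). Q (\<lambda>k. x k - y k)} = emeasure (LP I) {y \<in> space (LP I). Q y}"
proof -
  have "ennreal (\<Prod>k\<in>I. \<bar>-1::real\<bar>) * emeasure (LP I) {y \<in> space (LP I). Q (affT I x (\<lambda>_. -1) y)} = emeasure (LP I) {y \<in> space (LP I). Q y}"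
    by (rule aff_set[OF I subset_refl _ S]) auto
  moreover have "{y \<in> space (LP I). Q (affT I x (\<lambda>_. -1) y)} = {y \<in> space (LP I). Q (\<lambda>k. x k - y k)}"
  proof -
    have "Q (affT I x (\<lambda>_. -1) y) = Q (\<lambda>k. x k - y k)" for y
      by (rule Q) (auto simp: affT_def)
    then show ?thesis by auto
  qed
  ultimately show ?thesis by simp
qed

lemma lens_bounds:
  assumes I: "finite I"
  defines "Lx x \<equiv> emeasure (LP I) {y \<in> space (LP I). nrm2 I y \<le> 1 \<and> nrm2 I (\<lambda>k. x k - y k) \<le> 1}"
  defines "Mge x \<equiv> emeasure (LP I) {y \<in> space (LP I). nrm2 I y \<le> 1 \<and> ip I x y \<in> {s. 2 * s \<ge> nrm2 I x}}"
  defines "Mgt x \<equiv> emeasure (LP I) {y \<in> space (LP I). nrm2 I y \<le> 1 \<and> ip I x y \<in> {s. 2 * s > nrm2 I x}}"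
  shows "Mge x + Mgt x \<le> Lx x" "Lx x \<le> Mge x + Mge x"
proof -
  have ipx: "ip I x (\<lambda>k. x k - y k) = nrm2 I x - ip I x y" for y
    unfolding ip_def nrm2_def by (simp add: right_diff_distrib sum_subtractf power2_eq_square)
  have nn: "nrm2 I (\<lambda>k. x k - (x k - y k)) = nrm2 I y" for y unfolding nrm2_def by simp
  define S1 where "S1 = {y \<in> space (LP I). nrm2 I y \<le> 1 \<and> 2 * ip I x y \<ge> nrm2 I x}"
  define S2 where "S2 = {y \<in> space (LP I). nrm2 I (\<lambda>k. x k - y k) \<le> 1 \<and> 2 * ip I x y < nrm2 I x}"
  define S3 where "S3 = {y \<in> space (LP I). nrm2 I (\<lambda>k. x k - y k) \<le> 1 \<and> 2 * ip I x y \<le> nrm2 I x}"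
  define Ln where "Ln = {y \<in> space (LP I). nrm2 I y \<le> 1 \<and> nrm2 I (\<lambda>k. x k - y k) \<le> 1}"
  have [measurable]: "S1 \<in> sets (LP I)" "S2 \<in> sets (LP I)" "S3 \<in> sets (LP I)" "Ln \<in> sets (LP I)"
    unfolding S1_def S2_def S3_def Ln_def by measurable
  have e1: "emeasure (LP I) S1 = Mge x" unfolding S1_def Mge_def by (rule arg_cong[where f="emeasure _"]) auto
  have e2: "emeasure (LP I) S2 = Mgt x"
  proof -
    have "emeasure (LP I) S2 = emeasure (LP I) {y \<in> space (LP I). nrm2 I (\<lambda>k. x k - (x k - y k)) \<le> 1 \<and> 2 * ip I x (\<lambda>k. x k - y k) < nrm2 I x}"
      unfolding S2_def by (rule reflect_set[OF I, symmetric]) (measurable, auto simp: nrm2_def ip_def)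
    also have "\<dots> = Mgt x" unfolding Mgt_def nn ipx by (rule arg_cong[where f="emeasure _"]) auto
    finally show ?thesis .
  qed
  have e3: "emeasure (LP I) S3 = Mge x"
  proof -
    have "emeasure (LP I) S3 = emeasure (LP I) {y \<in> space (LP I). nrm2 I (\<lambda>k. x k - (x k - y k)) \<le> 1 \<and> 2 * ip I x (\<lambda>k. x k - y k) \<le> nrm2 I x}"
      unfolding S3_def by (rule reflect_set[OF I, symmetric]) (measurable, auto simp: nrm2_def ip_def)
    also have "\<dots> = Mge x" unfolding Mge_def nn ipx by (rule arg_cong[where f="emeasure _"]) auto
    finally show ?thesis .
  qed
  have d: "nrm2 I (\<lambda>k. x k - y k) = nrm2 I x - 2 * ip I x y + nrm2 I y" for y by (rule nrm2_diff)
  have "S1 \<union> S2 \<subseteq> Ln" unfolding S1_def S2_def Ln_def using d by force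
  moreover have "S1 \<inter> S2 = {}" unfolding S1_def S2_def by auto
  ultimately show "Mge x + Mgt x \<le> Lx x"
    unfolding Lx_def e1[symmetric] e2[symmetric] Ln_def[symmetric]
    by (metis plus_emeasure emeasure_mono sets.Un \<open>S1 \<in> sets (LP I)\<close> \<open>S2 \<in> sets (LP I)\<close> \<open>Ln \<in> sets (LP I)\<close>)
  have "Ln \<subseteq> S1 \<union> S3" unfolding S1_def S3_def Ln_def by auto
  then have "emeasure (LP I) Ln \<le> emeasure (LP I) (S1 \<union> S3)" by (intro emeasure_mono) auto
  also have "\<dots> \<le> emeasure (LP I) S1 + emeasure (LP I) S3" by (intro emeasure_subadditive) auto
  finally show "Lx x \<le> Mge x + Mge x" unfolding Lx_def Ln_def[symmetric] e1 e3 .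
qed


definition G :: "nat \<Rightarrow> real \<Rightarrow> real" where
  "G n t = (if t \<le> 0 then 0 else min 1 (2 * t)) ^ n"

lemma G_meas[measurable]: "G n \<in> borel_measurable borel"
  unfolding G_def[abs_def] by measurable

lemma G_nonneg: "G n t \<ge> 0" unfolding G_def by auto

lemma N_meas:
  assumes I: "finite I" "i0 \<in> I"
  shows "emeasure (LP I) {x \<in> space (LP I). nrm2 I x \<le> 1 \<and> nrm2 I x \<le> 2 * (sqrt (nrm2 I x) * t)} = ennreal (G (card I) t) * V I"
proof (cases "t \<le> 0")
  case True
  have "{x \<in> space (LP I). nrm2 I x \<le> 1 \<and> nrm2 I x \<le> 2 * (sqrt (nrm2 I x) * t)} \<subseteq> {y \<in> space (LP I). y i0 = 0}"
  proof safe
    fix x assume x: "x \<in> space (LP I)" "nrm2 I x \<le> 2 * (sqrt (nrm2 I x) * t)"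
    have "sqrt (nrm2 I x) * t \<le> 0" using True nrm2_nonneg[of I x] by (simp add: mult_nonneg_nonpos)
    then have "nrm2 I x \<le> 0" using x by linarith
    moreover have "(x i0)\<^sup>2 \<le> nrm2 I x" unfolding nrm2_def using I by (intro member_le_sum) auto
    ultimately show "x i0 = 0" by (smt (verit) zero_le_power2 power_eq_0_iff zero_neq_numeral)
  qed
  moreover have "{x \<in> space (LP I). nrm2 I x \<le> 1 \<and> nrm2 I x \<le> 2 * (sqrt (nrm2 I x) * t)} \<in> sets (LP I)" by measurable
  ultimately have "{x \<in> space (LP I). nrm2 I x \<le> 1 \<and> nrm2 I x \<le> 2 * (sqrt (nrm2 I x) * t)} \<in> null_sets (LP I)"
    using null_sets_subset[OF hyper_null[OF I, of 0]] by blast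
  moreover have "G (card I) t = 0" using True I by (auto simp: G_def card_gt_0_iff)
  ultimately show ?thesis by auto
next
  case False
  define s where "s = min 1 (2 * t)"
  have s: "s > 0" "s \<le> 1" "s \<le> 2 * t" using False unfolding s_def by auto
  have eq: "(nrm2 I x \<le> 1 \<and> nrm2 I x \<le> 2 * (sqrt (nrm2 I x) * t)) \<longleftrightarrow> nrm2 I x \<le> s\<^sup>2" for x
  proof -
    define r where "r = sqrt (nrm2 I x)"
    have r: "r \<ge> 0" "nrm2 I x = r\<^sup>2" unfolding r_def using nrm2_nonneg[of I x] by auto
    have "(r\<^sup>2 \<le> 1 \<and> r\<^sup>2 \<le> 2 * (r * t)) \<longleftrightarrow> r \<le> s"
    proof
      assume a: "r\<^sup>2 \<le> 1 \<and> r\<^sup>2 \<le> 2 * (r * t)"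
      then have "r \<le> 1" using r(1) by (simp add: abs_square_le_1)
      moreover have "r \<le> 2 * t"
      proof (cases "r = 0")
        case False
        then have "r * r \<le> (2 * t) * r" using a by (simp add: power2_eq_square mult_ac)
        then show ?thesis using False r(1) by (simp add: mult_le_cancel_right)
      qed (use s in auto)
      ultimately show "r \<le> s" unfolding s_def by simp
    next
      assume "r \<le> s"
      then have "r \<le> 1" "r \<le> 2 * t" using s by auto
      have "r * r \<le> 1" using \<open>r \<le> 1\<close> r(1) by (simp add: mult_le_one)
      moreover have "r * r \<le> r * (2 * t)" using \<open>r \<le> 2 * t\<close> r(1) by (simp add: mult_left_mono)
      ultimately show "r\<^sup>2 \<le> 1 \<and> r\<^sup>2 \<le> 2 * (r * t)" by (simp add: power2_eq_square mult_ac)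
    qed
    also have "\<dots> \<longleftrightarrow> r\<^sup>2 \<le> s\<^sup>2" using r(1) s(1) by (simp add: power_mono_iff)
    finally show ?thesis using r by (simp add: r_def[symmetric])
  qed
  have "emeasure (LP I) {x \<in> space (LP I). nrm2 I x \<le> 1 \<and> nrm2 I x \<le> 2 * (sqrt (nrm2 I x) * t)}
      = emeasure (LP I) {x \<in> space (LP I). nrm2 I x \<le> s\<^sup>2}" by (simp only: eq)
  also have "\<dots> = ennreal (s ^ card I) * V I" by (rule ball_scale[OF I(1) s(1)])
  finally show ?thesis using False by (simp add: G_def s_def)
qed

lemma LP_sf: "finite I \<Longrightarrow> sigma_finite_measure (LP I)"
  by (rule product_sigma_finite.sigma_finite[OF PSF])

lemma diff_pair_meas[measurable]: "(\<lambda>p. nrm2 I (\<lambda>k. fst p k - snd p k)) \<in> borel_measurable (LP I \<Otimes>\<^sub>M LP I)"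
  unfolding nrm2_def by measurable

lemma lens_int:
  assumes I: "finite I" "i0 \<in> I"
  defines "Bs \<equiv> {y \<in> space (LP I). nrm2 I y \<le> 1}"
  defines "Qs \<equiv> {p \<in> space (LP I \<Otimes>\<^sub>M LP I). nrm2 I (fst p) \<le> 1 \<and> nrm2 I (snd p) \<le> 1 \<and> nrm2 I (fst p) \<le> 2 * (sqrt (nrm2 I (fst p)) * snd p i0)}"
  defines "Es \<equiv> {p \<in> space (LP I \<Otimes>\<^sub>M LP I). nrm2 I (\<lambda>k. fst p k - snd p k) \<le> 1}"
  shows "(\<integral>\<^sup>+x. indicator Bs x * (\<integral>\<^sup>+y. indicator Bs y * indicator Es (x, y) \<partial>LP I) \<partial>LP I)
       = 2 * (\<integral>\<^sup>+x. (\<integral>\<^sup>+y. indicator Qs (x, y) \<partial>LP I) \<partial>LP I)"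
proof -
  interpret S: sigma_finite_measure "LP I" by (rule LP_sf[OF I(1)])
  interpret P: pair_sigma_finite "LP I" "LP I" ..
  have [measurable]: "Bs \<in> sets (LP I)" unfolding Bs_def by measurable
  have [measurable]: "Qs \<in> sets (LP I \<Otimes>\<^sub>M LP I)" unfolding Qs_def using I by measurable
  have [measurable]: "Es \<in> sets (LP I \<Otimes>\<^sub>M LP I)" unfolding Es_def by measurable
  define Lx where "Lx x = emeasure (LP I) {y \<in> space (LP I). nrm2 I y \<le> 1 \<and> nrm2 I (\<lambda>k. x k - y k) \<le> 1}" for x
  define Mge where "Mge x = emeasure (LP I) {y \<in> space (LP I). nrm2 I y \<le> 1 \<and> ip I x y \<in> {s. 2 * s \<ge> nrm2 I x}}" for x
  define Mgt where "Mgt x = emeasure (LP I) {y \<in> space (LP I). nrm2 I y \<le> 1 \<and> ip I x y \<in> {s. 2 * s > nrm2 I x}}" for x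
  define F where "F x = (\<integral>\<^sup>+y. indicator Qs (x, y) \<partial>LP I)" for x
  define Rge where "Rge x = emeasure (LP I) {y \<in> space (LP I). nrm2 I y \<le> 1 \<and> nrm2 I x \<le> 2 * (sqrt (nrm2 I x) * y i0)}" for x
  have Fm[measurable]: "F \<in> borel_measurable (LP I)" unfolding F_def[abs_def] by measurable
  have FR: "F x = indicator Bs x * Rge x" for x
  proof (cases "x \<in> Bs")
    case True
    have "F x = (\<integral>\<^sup>+y. indicator {y \<in> space (LP I). nrm2 I y \<le> 1 \<and> nrm2 I x \<le> 2 * (sqrt (nrm2 I x) * y i0)} y \<partial>LP I)"
      unfolding F_def using True
      by (intro nn_integral_cong) (auto simp: Qs_def Bs_def indicator_def space_pair_measure)
    also have "\<dots> = Rge x" unfolding Rge_def using I by (intro nn_integral_indicator) measurable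
    finally show ?thesis using True by simp
  next
    case False
    then have "F x = 0" unfolding F_def
      by (auto simp: Qs_def Bs_def indicator_def space_pair_measure)
    then show ?thesis using False by simp
  qed
  have MR: "Mge x = Rge x" for x
    unfolding Mge_def Rge_def using rotn[OF I, of "{s. 2 * s \<ge> nrm2 I x}" 1 x] by (simp add: mult_ac)
  have MR2: "Mgt x = Rge x" if x: "x i0 \<noteq> 0" for x
  proof -
    have "Mgt x = emeasure (LP I) {y \<in> space (LP I). nrm2 I y \<le> 1 \<and> nrm2 I x < 2 * (sqrt (nrm2 I x) * y i0)}"
      unfolding Mgt_def using rotn[OF I, of "{s. 2 * s > nrm2 I x}" 1 x] by (simp add: mult_ac)
    also have "\<dots> = emeasure (LP I) ({y \<in> space (LP I). nrm2 I y \<le> 1 \<and> nrm2 I x < 2 * (sqrt (nrm2 I x) * y i0)} \<union>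
                  {y \<in> space (LP I). nrm2 I y \<le> 1 \<and> y i0 = sqrt (nrm2 I x) / 2})"
    proof (rule emeasure_Un_null_set[symmetric])
      show "{y \<in> space (LP I). nrm2 I y \<le> 1 \<and> nrm2 I x < 2 * (sqrt (nrm2 I x) * y i0)} \<in> sets (LP I)"
        using I by measurable
      have "{y \<in> space (LP I). nrm2 I y \<le> 1 \<and> y i0 = sqrt (nrm2 I x) / 2} \<in> sets (LP I)" using I by measurable
      then show "{y \<in> space (LP I). nrm2 I y \<le> 1 \<and> y i0 = sqrt (nrm2 I x) / 2} \<in> null_sets (LP I)"
        using null_sets_subset[OF hyper_null[OF I, of "sqrt (nrm2 I x) / 2"]] by blast
    qed
    also have "\<dots> = Rge x"
    proof -
      have pos: "nrm2 I x > 0"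
      proof -
        have "(x i0)\<^sup>2 \<le> nrm2 I x" unfolding nrm2_def using I by (intro member_le_sum) auto
        moreover have "(x i0)\<^sup>2 > 0" using x by simp
        ultimately show ?thesis by linarith
      qed
      define r where "r = sqrt (nrm2 I x)"
      have r: "r > 0" "nrm2 I x = r * r" using pos unfolding r_def by auto
      have eqv: "nrm2 I x = 2 * (r * t) \<longleftrightarrow> t = r / 2" for t
      proof -
        have "nrm2 I x = 2 * (r * t) \<longleftrightarrow> r * r = r * (2 * t)" using r by (simp add: mult_ac)
        also have "\<dots> \<longleftrightarrow> r = 2 * t" using r by simp
        finally show ?thesis by auto
      qed
      have "{y \<in> space (LP I). nrm2 I y \<le> 1 \<and> nrm2 I x < 2 * (r * y i0)} \<union>
                  {y \<in> space (LP I). nrm2 I y \<le> 1 \<and> y i0 = r / 2} = 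
            {y \<in> space (LP I). nrm2 I y \<le> 1 \<and> nrm2 I x \<le> 2 * (r * y i0)}"
        using eqv by (auto simp: order_le_less)
      then show ?thesis unfolding Rge_def r_def by simp
    qed
    finally show ?thesis .
  qed
  have LB1: "Mge x + Mgt x \<le> Lx x" for x unfolding Mge_def Mgt_def Lx_def by (rule lens_bounds(1)[OF I(1)])
  have LB2: "Lx x \<le> Mge x + Mge x" for x unfolding Mge_def Lx_def by (rule lens_bounds(2)[OF I(1)])
  have inner: "indicator Bs x * (\<integral>\<^sup>+y. indicator Bs y * indicator Es (x, y) \<partial>LP I) = indicator Bs x * Lx x" for x
  proof (cases "x \<in> Bs")
    case True
    have "(\<integral>\<^sup>+y. indicator Bs y * indicator Es (x, y) \<partial>LP I)
        = (\<integral>\<^sup>+y. indicator {y \<in> space (LP I). nrm2 I y \<le> 1 \<and> nrm2 I (\<lambda>k. x k - y k) \<le> 1} y \<partial>LP I)"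
      using True by (intro nn_integral_cong) (auto simp: Bs_def Es_def indicator_def space_pair_measure)
    also have "\<dots> = Lx x" unfolding Lx_def by (intro nn_integral_indicator) measurable
    finally show ?thesis by simp
  qed simp
  have "(\<integral>\<^sup>+x. indicator Bs x * (\<integral>\<^sup>+y. indicator Bs y * indicator Es (x, y) \<partial>LP I) \<partial>LP I)
      = (\<integral>\<^sup>+x. indicator Bs x * Lx x \<partial>LP I)" by (simp add: inner)
  also have "\<dots> = (\<integral>\<^sup>+x. 2 * F x \<partial>LP I)"
  proof (rule antisym)
    show "(\<integral>\<^sup>+x. indicator Bs x * Lx x \<partial>LP I) \<le> (\<integral>\<^sup>+x. 2 * F x \<partial>LP I)"
    proof (rule nn_integral_mono)
      fix x
      have "indicator Bs x * Lx x \<le> indicator Bs x * (Mge x + Mge x)" using LB2[of x] by (intro mult_left_mono) auto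
      also have "\<dots> = 2 * F x" unfolding FR MR by (simp only: mult_2 distrib_left)
      finally show "indicator Bs x * Lx x \<le> 2 * F x" .
    qed
    have ae: "AE x in LP I. x i0 \<noteq> 0"
      by (rule AE_I'[OF hyper_null[OF I, of 0]]) auto
    show "(\<integral>\<^sup>+x. 2 * F x \<partial>LP I) \<le> (\<integral>\<^sup>+x. indicator Bs x * Lx x \<partial>LP I)"
    proof (rule nn_integral_mono_AE)
      show "AE x in LP I. 2 * F x \<le> indicator Bs x * Lx x"
        using ae
      proof eventually_elim
        case (elim x)
        have "2 * F x = indicator Bs x * (Mge x + Mgt x)" unfolding FR MR MR2[of x, OF elim] by (simp only: mult_2 distrib_left)
        also have "\<dots> \<le> indicator Bs x * Lx x" using LB1[of x] by (intro mult_left_mono) auto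
        finally show ?case .
      qed
    qed
  qed
  also have "\<dots> = 2 * (\<integral>\<^sup>+x. F x \<partial>LP I)" by (rule nn_integral_cmult) measurable
  finally show ?thesis unfolding F_def .
qed


lemma slice_int':
  assumes I: "finite I" "i0 \<in> I" "2 \<le> card I" and g[measurable]: "g \<in> borel_measurable borel"
  shows "(\<integral>\<^sup>+y. indicator {y \<in> space (LP I). nrm2 I y \<le> 1} y * g (y i0) \<partial>LP I)
       = V (I - {i0}) * (\<integral>\<^sup>+t. g t * ennreal (qf (card I - 1) t) \<partial>lborel)"
proof -
  have c: "card (I - {i0}) = card I - 1" using I by (simp add: card_Diff_singleton)
  then have "card (I - {i0}) > 0" using I(3) by simp
  then have ne: "I - {i0} \<noteq> {}" by (metis card.empty less_irrefl)
  have K: "finite (I - {i0})" "I - {i0} \<noteq> {}" "i0 \<notin> I - {i0}" "insert i0 (I - {i0}) = I" "card (I - {i0}) = card I - 1"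
    using I ne c by auto
  show ?thesis using slice_int[OF K(1-3) g] unfolding K(4,5) .
qed

lemma Q_int:
  assumes I: "finite I" "i0 \<in> I" "2 \<le> card I"
  defines "Qs \<equiv> {p \<in> space (LP I \<Otimes>\<^sub>M LP I). nrm2 I (fst p) \<le> 1 \<and> nrm2 I (snd p) \<le> 1 \<and> nrm2 I (fst p) \<le> 2 * (sqrt (nrm2 I (fst p)) * snd p i0)}"
  shows "(\<integral>\<^sup>+x. (\<integral>\<^sup>+y. indicator Qs (x, y) \<partial>LP I) \<partial>LP I)
       = V I * (V (I - {i0}) * (\<integral>\<^sup>+t. ennreal (G (card I) t) * ennreal (qf (card I - 1) t) \<partial>lborel))"
proof -
  interpret S: sigma_finite_measure "LP I" by (rule LP_sf[OF I(1)])
  interpret P: pair_sigma_finite "LP I" "LP I" ..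
  have [measurable]: "Qs \<in> sets (LP I \<Otimes>\<^sub>M LP I)" unfolding Qs_def using I by measurable
  let ?Bs = "{y \<in> space (LP I). nrm2 I y \<le> 1}"
  have "(\<integral>\<^sup>+x. (\<integral>\<^sup>+y. indicator Qs (x, y) \<partial>LP I) \<partial>LP I) = (\<integral>\<^sup>+y. (\<integral>\<^sup>+x. indicator Qs (x, y) \<partial>LP I) \<partial>LP I)"
    by (rule P.Fubini'[symmetric]) measurable
  also have "\<dots> = (\<integral>\<^sup>+y. V I * (indicator ?Bs y * ennreal (G (card I) (y i0))) \<partial>LP I)"
  proof (rule nn_integral_cong)
    fix y assume y: "y \<in> space (LP I)"
    show "(\<integral>\<^sup>+x. indicator Qs (x, y) \<partial>LP I) = V I * (indicator ?Bs y * ennreal (G (card I) (y i0)))"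
    proof (cases "nrm2 I y \<le> 1")
      case True
      have "(\<integral>\<^sup>+x. indicator Qs (x, y) \<partial>LP I) = (\<integral>\<^sup>+x. indicator {x \<in> space (LP I). nrm2 I x \<le> 1 \<and> nrm2 I x \<le> 2 * (sqrt (nrm2 I x) * y i0)} x \<partial>LP I)"
        using True y by (intro nn_integral_cong) (auto simp: Qs_def indicator_def space_pair_measure)
      also have "\<dots> = ennreal (G (card I) (y i0)) * V I"
        by (subst nn_integral_indicator) (use I N_meas[OF I(1,2)] in measurable)
      finally show ?thesis using True y by (simp add: mult_ac)
    next
      case False
      then show ?thesis by (auto simp: Qs_def indicator_def space_pair_measure)
    qed
  qed
  also have "\<dots> = V I * (\<integral>\<^sup>+y. indicator ?Bs y * ennreal (G (card I) (y i0)) \<partial>LP I)"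
    by (rule nn_integral_cmult) (use I in measurable)
  also have "\<dots> = V I * (V (I - {i0}) * (\<integral>\<^sup>+t. ennreal (G (card I) t) * ennreal (qf (card I - 1) t) \<partial>lborel))"
    using slice_int'[OF I, of "\<lambda>t. ennreal (G (card I) t)"] by simp
  finally show ?thesis .
qed

lemma VI_slice:
  assumes I: "finite I" "i0 \<in> I" "2 \<le> card I"
  shows "V I = V (I - {i0}) * (\<integral>\<^sup>+t. ennreal (qf (card I - 1) t) \<partial>lborel)"
proof -
  have "V I = (\<integral>\<^sup>+y. indicator {y \<in> space (LP I). nrm2 I y \<le> 1} y * 1 \<partial>LP I)"
  proof -
    have "{y \<in> space (LP I). nrm2 I y \<le> 1} \<in> sets (LP I)" by measurable
    then show ?thesis unfolding V_def by simp
  qed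
  also have "\<dots> = V (I - {i0}) * (\<integral>\<^sup>+t. 1 * ennreal (qf (card I - 1) t) \<partial>lborel)"
    by (rule slice_int'[OF I]) simp
  finally show ?thesis by simp
qed


lemma w_gen:
  assumes I: "finite I" "i0 \<in> I" "2 \<le> card I"
  defines "Bs \<equiv> {y \<in> space (LP I). nrm2 I y \<le> 1}"
  defines "Es \<equiv> {p \<in> space (LP I \<Otimes>\<^sub>M LP I). nrm2 I (\<lambda>k. fst p k - snd p k) \<le> 1}"
  defines "U \<equiv> uniform_measure (LP I) Bs"
  shows "emeasure (U \<Otimes>\<^sub>M U) Es * (V I * V I)
       = 2 * (V I * (V (I - {i0}) * (\<integral>\<^sup>+t. ennreal (G (card I) t) * ennreal (qf (card I - 1) t) \<partial>lborel)))"
proof -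
  interpret S: sigma_finite_measure "LP I" by (rule LP_sf[OF I(1)])
  have [measurable]: "Bs \<in> sets (LP I)" unfolding Bs_def by measurable
  have EsL: "Es \<in> sets (LP I \<Otimes>\<^sub>M LP I)" unfolding Es_def by measurable
  have VB: "emeasure (LP I) Bs = V I" unfolding Bs_def V_def ..
  have V0: "V I \<noteq> 0" "V I < \<infinity>" using V_pos[OF I(1)] V_finite[OF I(1)] by auto
  have Ud: "U = density (LP I) (\<lambda>x. indicator Bs x * inverse (V I))"
    unfolding U_def uniform_measure_def VB divide_ennreal_def ..
  interpret PU: prob_space U unfolding U_def by (rule prob_space_uniform_measure) (use VB V0 in auto)
  interpret PP: pair_sigma_finite U U ..
  have sU[measurable_cong]: "sets U = sets (LP I)" unfolding Ud by simp
  have [measurable]: "Es \<in> sets (U \<Otimes>\<^sub>M U)" 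
  proof -
    have "Es \<in> sets (LP I \<Otimes>\<^sub>M LP I)" unfolding Es_def by measurable
    moreover have "sets (U \<Otimes>\<^sub>M U) = sets (LP I \<Otimes>\<^sub>M LP I)" by (rule sets_pair_measure_cong) (use sU in auto)
    ultimately show ?thesis by simp
  qed
  define c where "c = inverse (V I)"
  have "emeasure (U \<Otimes>\<^sub>M U) Es = (\<integral>\<^sup>+p. indicator Es p \<partial>(U \<Otimes>\<^sub>M U))" by simp
  also have "\<dots> = (\<integral>\<^sup>+x. (\<integral>\<^sup>+y. indicator Es (x, y) \<partial>U) \<partial>U)"
    by (rule PU.nn_integral_fst[symmetric]) measurable
  also have "\<dots> = (\<integral>\<^sup>+x. indicator Bs x * c * (\<integral>\<^sup>+y. indicator Es (x, y) \<partial>U) \<partial>LP I)"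
  proof -
    define F where "F x = (\<integral>\<^sup>+y. indicator Es (x, y) \<partial>U)" for x
    have m1: "(\<lambda>x. indicator Bs x * c) \<in> borel_measurable (LP I)" by measurable
    have "F \<in> borel_measurable U" unfolding F_def[abs_def]
      by (rule PU.borel_measurable_nn_integral_fst) measurable
    then have m2: "F \<in> borel_measurable (LP I)" using measurable_cong_sets[OF sU refl] by simp
    have "(\<integral>\<^sup>+x. F x \<partial>U) = (\<integral>\<^sup>+x. indicator Bs x * c * F x \<partial>LP I)"
      unfolding Ud c_def[symmetric] by (rule nn_integral_density[OF m1 m2])
    then show ?thesis unfolding F_def .
  qed
  also have "\<dots> = (\<integral>\<^sup>+x. indicator Bs x * c * (c * (\<integral>\<^sup>+y. indicator Bs y * indicator Es (x, y) \<partial>LP I)) \<partial>LP I)"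
  proof (rule nn_integral_cong)
    fix x assume x: "x \<in> space (LP I)"
    have "(\<integral>\<^sup>+y. indicator Es (x, y) \<partial>U) = (\<integral>\<^sup>+y. indicator Bs y * c * indicator Es (x, y) \<partial>LP I)"
    proof -
      have m1: "(\<lambda>x. indicator Bs x * c) \<in> borel_measurable (LP I)" by measurable
      have m2: "(\<lambda>y. indicator Es (x, y)) \<in> borel_measurable (LP I)" using x EsL by measurable
      show ?thesis unfolding Ud c_def[symmetric] by (rule nn_integral_density[OF m1 m2])
    qed
    also have "\<dots> = (\<integral>\<^sup>+y. c * (indicator Bs y * indicator Es (x, y)) \<partial>LP I)" by (intro nn_integral_cong) (simp only: mult.assoc mult.commute mult.left_commute)
    also have "\<dots> = c * (\<integral>\<^sup>+y. indicator Bs y * indicator Es (x, y) \<partial>LP I)"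
      by (rule nn_integral_cmult) (use x EsL in measurable)
    finally show "indicator Bs x * c * (\<integral>\<^sup>+y. indicator Es (x, y) \<partial>U) = indicator Bs x * c * (c * (\<integral>\<^sup>+y. indicator Bs y * indicator Es (x, y) \<partial>LP I))"
      by simp
  qed
  also have "\<dots> = (\<integral>\<^sup>+x. (c * c) * (indicator Bs x * (\<integral>\<^sup>+y. indicator Bs y * indicator Es (x, y) \<partial>LP I)) \<partial>LP I)"
    by (intro nn_integral_cong) (simp only: mult.assoc mult.commute mult.left_commute)
  also have "\<dots> = (c * c) * (\<integral>\<^sup>+x. indicator Bs x * (\<integral>\<^sup>+y. indicator Bs y * indicator Es (x, y) \<partial>LP I) \<partial>LP I)"
  proof (rule nn_integral_cmult)
    have [measurable]: "Es \<in> sets (LP I \<Otimes>\<^sub>M LP I)" unfolding Es_def by measurable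
    show "(\<lambda>x. indicator Bs x * (\<integral>\<^sup>+y. indicator Bs y * indicator Es (x, y) \<partial>LP I)) \<in> borel_measurable (LP I)"
      by measurable
  qed
  also have "(\<integral>\<^sup>+x. indicator Bs x * (\<integral>\<^sup>+y. indicator Bs y * indicator Es (x, y) \<partial>LP I) \<partial>LP I)
     = 2 * (V I * (V (I - {i0}) * (\<integral>\<^sup>+t. ennreal (G (card I) t) * ennreal (qf (card I - 1) t) \<partial>lborel)))"
    unfolding Bs_def Es_def lens_int[OF I(1,2)] Q_int[OF I] ..
  finally have "emeasure (U \<Otimes>\<^sub>M U) Es = c * c * (2 * (V I * (V (I - {i0}) * (\<integral>\<^sup>+t. ennreal (G (card I) t) * ennreal (qf (card I - 1) t) \<partial>lborel))))" .
  moreover have "c * V I = 1"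
  proof -
    have "V I / V I = 1" using V0 by simp
    then show ?thesis unfolding c_def divide_ennreal_def by (simp add: mult.commute)
  qed
  ultimately show ?thesis
  proof -
    assume e: "emeasure (U \<Otimes>\<^sub>M U) Es = c * c * (2 * (V I * (V (I - {i0}) * (\<integral>\<^sup>+t. ennreal (G (card I) t) * ennreal (qf (card I - 1) t) \<partial>lborel))))"
      and cv: "c * V I = 1"
    define X where "X = 2 * (V I * (V (I - {i0}) * (\<integral>\<^sup>+t. ennreal (G (card I) t) * ennreal (qf (card I - 1) t) \<partial>lborel)))"
    have "emeasure (U \<Otimes>\<^sub>M U) Es * (V I * V I) = (c * V I) * (c * V I) * X"
      unfolding e X_def[symmetric] by (simp only: mult.assoc mult.commute mult.left_commute)
    then show ?thesis unfolding cv X_def by simp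
  qed
qed

lemma int_sub_bound:
  fixes h :: "real \<Rightarrow> real"
  assumes c: "continuous_on {0..1} h" and nn: "\<And>t. t \<in> {0..1} \<Longrightarrow> 0 \<le> h t"
    and lb: "\<And>t. t \<in> {1/4..3/8} \<Longrightarrow> \<kappa> \<le> h t"
  shows "\<kappa> / 8 \<le> integral {0..1} h"
proof -
  have i1: "h integrable_on {0..1}" using c by (rule integrable_continuous_interval)
  have i2: "h integrable_on {1/4..3/8::real}"
    using integrable_continuous_interval[OF continuous_on_subset[OF c]] by auto
  have "\<kappa> / 8 = integral {1/4..3/8::real} (\<lambda>_. \<kappa>)" by simp
  also have "\<dots> \<le> integral {1/4..3/8} h" by (rule integral_le) (use i2 lb in auto)
  also have "\<dots> \<le> integral {0..1} h" by (rule integral_subset_le) (use i1 i2 nn in auto)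
  finally show ?thesis .
qed

lemma RA:
  assumes d: "d \<ge> 1"
  defines "a \<equiv> \<lambda>t::real. sqrt (1 - t\<^sup>2) ^ (d - 1)"
  defines "b \<equiv> \<lambda>t::real. sqrt (1 - t\<^sup>2) ^ d"
  defines "g1 \<equiv> \<lambda>t::real. min 1 (2 * t) ^ d"
  defines "g2 \<equiv> \<lambda>t::real. min 1 (2 * t) ^ Suc d"
  shows "integral {0..1} (\<lambda>t. g1 t * a t) / integral {0..1} a - integral {0..1} (\<lambda>t. g2 t * b t) / integral {0..1} b \<ge> (1/4)^d / 32"
proof -
  define s where "s t = sqrt (1 - t\<^sup>2)" for t :: real
  have cs: "continuous_on {0..1} s" unfolding s_def by (intro continuous_intros)
  have ca: "continuous_on {0..1} a" unfolding a_def by (intro continuous_intros)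
  have cb: "continuous_on {0..1} b" unfolding b_def by (intro continuous_intros)
  have cg1: "continuous_on {0..1} g1" unfolding g1_def by (intro continuous_intros)
  have cg2: "continuous_on {0..1} g2" unfolding g2_def by (intro continuous_intros)
  have s01: "0 \<le> s t" "s t \<le> 1" if "t \<in> {0..1}" for t
    using that unfolding s_def by (auto simp: power_le_one abs_square_le_1)
  have smono: "s u \<le> s t" if "0 \<le> t" "t \<le> u" for t u
  proof -
    have "t\<^sup>2 \<le> u\<^sup>2" using that by (simp add: power_mono)
    then show ?thesis unfolding s_def by simp
  qed
  have as: "a t = s t ^ (d - 1)" "b t = s t ^ d" for t unfolding a_def b_def s_def by auto
  have ba: "b t = a t * s t" for t using d unfolding as by (metis One_nat_def Suc_diff_le diff_Suc_1 le_refl power_Suc2 Suc_le_eq  power_Suc)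
  have a0: "0 \<le> a t" "a t \<le> 1" if "t \<in> {0..1}" for t unfolding as using s01[OF that] by (auto simp: power_le_one)
  have b0: "0 \<le> b t" "b t \<le> a t" if "t \<in> {0..1}" for t unfolding ba using s01[OF that] a0[OF that]
    by (auto simp: mult_left_le)
  have g0: "0 \<le> g1 t" "g1 t \<le> 1" if "t \<in> {0..1}" for t unfolding g1_def using that by (auto simp: power_le_one)
  have g1mono: "g1 t \<le> g1 u" if "t \<in> {0..1}" "t \<le> u" for t u
    unfolding g1_def using that by (intro power_mono) auto
  have g21: "g2 t \<le> g1 t" if "t \<in> {0..1}" for t
  proof -
    have "g2 t = g1 t * min 1 (2 * t)" unfolding g1_def g2_def by (simp add: power_Suc2)
    also have "\<dots> \<le> g1 t" using g0[OF that] by (simp add: mult_left_le)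
    finally show ?thesis .
  qed
  have ia: "a integrable_on {0..1}" using ca by (rule integrable_continuous_interval)
  have ib: "b integrable_on {0..1}" using cb by (rule integrable_continuous_interval)
  have i1: "(\<lambda>t. g1 t * a t) integrable_on {0..1}" using cg1 ca by (intro integrable_continuous_interval continuous_intros)
  have i2: "(\<lambda>t. g1 t * b t) integrable_on {0..1}" using cg1 cb by (intro integrable_continuous_interval continuous_intros)
  have i3: "(\<lambda>t. g2 t * b t) integrable_on {0..1}" using cg2 cb by (intro integrable_continuous_interval continuous_intros)
  define Aa where "Aa = integral {0..1} a"
  define Ab where "Ab = integral {0..1} b"
  define I1 where "I1 = integral {0..1} (\<lambda>t. g1 t * a t)"
  define I2 where "I2 = integral {0..1} (\<lambda>t. g1 t * b t)"
  define I3 where "I3 = integral {0..1} (\<lambda>t. g2 t * b t)"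
  have Abpos: "Ab > 0"
  proof -
    have "(1/2)^d / 8 \<le> Ab" unfolding Ab_def
    proof (rule int_sub_bound[OF cb])
      show "0 \<le> b t" if "t \<in> {0..1}" for t using b0[OF that] by simp
      show "(1/2)^d \<le> b t" if t: "t \<in> {1/4..3/8}" for t
      proof -
        have "t\<^sup>2 \<le> (3/8)\<^sup>2" using t by (intro power_mono) auto
        then have "1/4 \<le> 1 - t\<^sup>2" by (simp add: power2_eq_square)
        then have "sqrt (1/4) \<le> s t" unfolding s_def by (simp only: real_sqrt_le_iff)
        moreover have "sqrt (1/4) = (1/2::real)" by (simp add: real_sqrt_divide)
        ultimately have "1/2 \<le> s t" by simp
        then show ?thesis unfolding as by (intro power_mono) auto
      qed
    qed
    moreover have "(1/2::real)^d / 8 > 0" by simp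
    ultimately show ?thesis by linarith
  qed
  have AbAa: "Ab \<le> Aa" unfolding Ab_def Aa_def by (rule integral_le[OF ib ia]) (use b0 in auto)
  have Aapos: "Aa > 0" using Abpos AbAa by linarith
  have Ab1: "Ab \<le> 1"
  proof -
    have "Ab \<le> integral {0..1::real} (\<lambda>_. 1)" unfolding Ab_def
      by (rule integral_le[OF ib]) (auto intro: order_trans[OF b0(2) a0(2)])
    then show ?thesis by simp
  qed
  define c where "c = Ab / Aa"
  have c: "0 < c" "c \<le> 1" unfolding c_def using Abpos Aapos AbAa by auto
  define t0 where "t0 = sqrt (1 - c\<^sup>2)"
  have t0: "0 \<le> t0" "t0 \<le> 1" unfolding t0_def using c by (auto simp: power_le_one)
  have st0: "s t0 = c"
  proof -
    have "1 - t0\<^sup>2 = c\<^sup>2" unfolding t0_def using c by (simp add: power_le_one)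
    then show ?thesis unfolding s_def using c by simp
  qed
  define K where "K = g1 t0"
  define F where "F t = (g1 t - K) * (a t / Aa - b t / Ab)" for t
  have Fnn: "0 \<le> F t" if t: "t \<in> {0..1}" for t
  proof -
    have phi: "a t / Aa - b t / Ab = (a t / Ab) * (c - s t)"
      unfolding ba c_def using Aapos Abpos by (simp add: field_simps)
    have at: "0 \<le> a t / Ab" using a0[OF t] Abpos by simp
    show ?thesis
    proof (cases "t \<le> t0")
      case True
      have "c \<le> s t" using smono[of t t0] True t st0 by auto
      then have "a t / Aa - b t / Ab \<le> 0" unfolding phi by (intro mult_nonneg_nonpos[OF at]) simp
      moreover have "g1 t - K \<le> 0" unfolding K_def using g1mono[OF t True] by simp
      ultimately show ?thesis unfolding F_def by (simp add: mult_nonpos_nonpos)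
    next
      case False
      have "s t \<le> c" using smono[of t0 t] False t0 st0 by auto
      then have "a t / Aa - b t / Ab \<ge> 0" unfolding phi by (intro mult_nonneg_nonneg[OF at]) simp
      moreover have "g1 t - K \<ge> 0" unfolding K_def using g1mono[of t0 t] t0 False by simp
      ultimately show ?thesis unfolding F_def by simp
    qed
  qed
  have Fint: "(F has_integral (I1 / Aa - I2 / Ab - K * (Aa / Aa) + K * (Ab / Ab))) {0..1}"
  proof -
    have eq: "F t = g1 t * a t / Aa - g1 t * b t / Ab - K * (a t / Aa) + K * (b t / Ab)" for t
      unfolding F_def using Aapos Abpos by (simp add: field_simps)
    show ?thesis unfolding eq I1_def I2_def Aa_def Ab_def
      by (intro has_integral_add has_integral_diff has_integral_divide has_integral_mult_right
          integrable_integral i1 i2 ia ib)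
  qed
  have step1: "I2 / Ab \<le> I1 / Aa"
    using has_integral_nonneg[OF Fint Fnn] Aapos Abpos by simp
  define h where "h t = (g1 t - g2 t) * b t" for t
  have ch: "continuous_on {0..1} h" unfolding h_def using cg1 cg2 cb by (intro continuous_intros)
  have gap: "(1/4)^d / 32 \<le> integral {0..1} h"
  proof -
    have "((1/4)^d / 4) / 8 \<le> integral {0..1} h"
    proof (rule int_sub_bound[OF ch])
      show "0 \<le> h t" if "t \<in> {0..1}" for t unfolding h_def using g21[OF that] b0[OF that] by simp
      show "(1/4)^d / 4 \<le> h t" if t: "t \<in> {1/4..3/8}" for t
      proof -
        have m: "min 1 (2 * t) = 2 * t" using t by auto
        have "g1 t - g2 t = (2 * t) ^ d * (1 - 2 * t)" unfolding g1_def g2_def m by (simp add: algebra_simps)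
        moreover have "(1/2)^d \<le> (2 * t) ^ d" using t by (intro power_mono) auto
        moreover have "1/4 \<le> 1 - 2 * t" using t by auto
        ultimately have g: "(1/2)^d * (1/4) \<le> g1 t - g2 t"
          by (simp only:) (rule mult_mono; use t in auto)
        have "t\<^sup>2 \<le> (3/8)\<^sup>2" using t by (intro power_mono) auto
        then have "1/4 \<le> 1 - t\<^sup>2" by (simp add: power2_eq_square)
        then have "sqrt (1/4) \<le> s t" unfolding s_def by (simp only: real_sqrt_le_iff)
        moreover have "sqrt (1/4) = (1/2::real)" by (simp add: real_sqrt_divide)
        ultimately have "1/2 \<le> s t" by simp
        then have bb: "(1/2)^d \<le> b t" unfolding as by (intro power_mono) auto
        have "(1/4::real)^d / 4 = ((1/2)^d * (1/4)) * (1/2)^d" by (simp add: power_mult_distrib[symmetric])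
        also have "\<dots> \<le> (g1 t - g2 t) * b t" by (rule mult_mono[OF g bb]) (use g21[of t] t in auto)
        finally show ?thesis unfolding h_def .
      qed
    qed
    then show ?thesis by simp
  qed
  have hI: "integral {0..1} h = I2 - I3"
    unfolding h_def I2_def I3_def by (simp add: left_diff_distrib integral_diff[OF i2 i3])
  have g32: "(1/4)^d / 32 \<le> (I2 - I3)" using gap hI by simp
  have "0 \<le> (1/4::real)^d / 32" by simp
  then have nn: "0 \<le> I2 - I3" using g32 by linarith
  have "(I2 - I3) * Ab \<le> (I2 - I3)" using mult_left_mono[OF Ab1 nn] by simp
  then have le: "I2 - I3 \<le> (I2 - I3) / Ab" using Abpos by (simp add: le_divide_eq)
  note g32
  also note le
  also have "\<dots> = I2 / Ab - I3 / Ab" by (simp add: diff_divide_distrib)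
  also have "\<dots> \<le> I1 / Aa - I3 / Ab" using step1 by simp
  finally show ?thesis unfolding I1_def I3_def Aa_def Ab_def .
qed

lemma gam_hk:
  assumes n: "n \<ge> 1"
  shows "(\<integral>\<^sup>+t. ennreal (G n t) * ennreal (qf (n - 1) t) \<partial>lborel)
       = ennreal (integral {0..1} (\<lambda>t. min 1 (2 * t) ^ n * sqrt (1 - t\<^sup>2) ^ (n - 1)))"
proof -
  define f where "f t = min 1 (2 * t) ^ n * sqrt (1 - t\<^sup>2) ^ (n - 1)" for t :: real
  have cf: "continuous_on {0..1} f" unfolding f_def by (intro continuous_intros)
  have fnn: "0 \<le> f t" if "t \<in> {0..1}" for t using that unfolding f_def
    by (auto simp: abs_square_le_1 intro!: mult_nonneg_nonneg)
  have "(\<integral>\<^sup>+t. ennreal (G n t) * ennreal (qf (n - 1) t) \<partial>lborel) = (\<integral>\<^sup>+t. ennreal (f t) * indicator {0..1} t \<partial>lborel)"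
  proof (rule nn_integral_cong)
    fix t :: real
    show "ennreal (G n t) * ennreal (qf (n - 1) t) = ennreal (f t) * indicator {0..1} t"
    proof (cases "t \<in> {0..1}")
      case True
      have "G n t = min 1 (2 * t) ^ n" using True n by (cases "t = 0") (auto simp: G_def)
      moreover have "qf (n - 1) t = sqrt (1 - t\<^sup>2) ^ (n - 1)" using True by (auto simp: qf_def)
      moreover have "0 \<le> min 1 (2 * t) ^ n" "0 \<le> sqrt (1 - t\<^sup>2) ^ (n - 1)"
        using True by (auto simp: abs_square_le_1)
      ultimately show ?thesis using True by (simp add: f_def ennreal_mult)
    next
      case False
      then have "t < 0 \<or> t > 1" by auto
      then have "G n t = 0 \<or> qf (n - 1) t = 0" using n by (auto simp: G_def qf_def)
      then show ?thesis using False by auto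
    qed
  qed
  also have "\<dots> = ennreal (integral {0..1} f)"
    by (rule nn_integral_has_integral_lebesgue'[OF fnn]) (use cf integrable_continuous_interval in auto)
  finally show ?thesis unfolding f_def .
qed

lemma j_hk:
  shows "(\<integral>\<^sup>+t. ennreal (qf m t) \<partial>lborel) = ennreal (2 * integral {0..1} (\<lambda>t. sqrt (1 - t\<^sup>2) ^ m))"
proof -
  define h where "h t = sqrt (1 - t\<^sup>2) ^ m" for t :: real
  have ch: "continuous_on {-1..1} h" unfolding h_def by (intro continuous_intros)
  have hnn: "0 \<le> h t" if "t \<in> {-1..1}" for t using that unfolding h_def
    by (auto simp: abs_square_le_1)
  have "(\<integral>\<^sup>+t. ennreal (qf m t) \<partial>lborel) = (\<integral>\<^sup>+t. ennreal (h t) * indicator {-1..1} t \<partial>lborel)"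
    by (rule nn_integral_cong) (auto simp: qf_def h_def indicator_def abs_le_iff)
  also have "\<dots> = ennreal (integral {-1..1} h)"
    by (rule nn_integral_has_integral_lebesgue'[OF hnn]) (use ch integrable_continuous_interval in auto)
  also have "integral {-1..1} h = integral {-1..0} h + integral {0..1} h"
    using Henstock_Kurzweil_Integration.integral_combine[where a="-1" and c=0 and b=1 and f=h] ch integrable_continuous_interval[where a="-1" and b=1 and f=h] by auto
  also have "integral {-1..0} h = integral {0..1} h"
  proof -
    have i01: "(h has_integral integral {0..1} h) {0..1}"
      using ch by (intro integrable_integral integrable_continuous_interval continuous_on_subset[OF ch]) auto
    then have "((\<lambda>x. h (-x)) has_integral integral {0..1} h) {-1..-0}"
      by (subst has_integral_reflect_real) 
    moreover have "(\<lambda>x. h (-x)) = h" unfolding h_def by auto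
    ultimately show ?thesis by (simp add: integral_unique)
  qed
  finally show ?thesis unfolding h_def by simp
qed


lemma w_formula:
  assumes d: "d \<ge> 2"
  shows "w d = integral {0..1} (\<lambda>t. min 1 (2 * t) ^ d * sqrt (1 - t\<^sup>2) ^ (d - 1)) / integral {0..1} (\<lambda>t. sqrt (1 - t\<^sup>2) ^ (d - 1))"
proof -
  define I where "I = {..<d}"
  have I: "finite I" "0 \<in> I" "2 \<le> card I" "card I = d" using d unfolding I_def by auto
  define Bs where "Bs = {y \<in> space (LP I). nrm2 I y \<le> 1}"
  define Es where "Es = {p \<in> space (LP I \<Otimes>\<^sub>M LP I). nrm2 I (\<lambda>k. fst p k - snd p k) \<le> 1}"
  define U where "U = uniform_measure (LP I) Bs"
  have Ueq: "unif_ball d = U"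
  proof -
    have "unit_ballR d = Bs" unfolding unit_ballR_def Bs_def eucl_norm_def lebR_def I_def nrm2_def by simp
    then show ?thesis unfolding unif_ball_def U_def lebR_def I_def by simp
  qed
  have spU: "space U = space (LP I)" unfolding U_def uniform_measure_def by simp
  have Eeq: "{(x, y) \<in> space (unif_ball d \<Otimes>\<^sub>M unif_ball d). eucl_norm d (\<lambda>i. x i - y i) \<le> 1} = Es"
    unfolding Ueq Es_def eucl_norm_def nrm2_def I_def space_pair_measure spU[unfolded I_def] by auto
  have wE: "w d = enn2real (emeasure (U \<Otimes>\<^sub>M U) Es)"
    unfolding w_def Eeq by (simp add: Ueq measure_def)
  define A where "A = integral {0..1} (\<lambda>t. sqrt (1 - t\<^sup>2) ^ (d - 1))"
  define \<gamma> where "\<gamma> = integral {0..1} (\<lambda>t. min 1 (2 * t) ^ d * sqrt (1 - t\<^sup>2) ^ (d - 1))"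
  have A0: "0 \<le> A" unfolding A_def by (rule integral_nonneg) (auto intro!: integrable_continuous_interval continuous_intros simp: abs_square_le_1)
  have g0: "0 \<le> \<gamma>" unfolding \<gamma>_def by (rule integral_nonneg) (auto intro!: integrable_continuous_interval continuous_intros simp: abs_square_le_1)
  have Gam: "(\<integral>\<^sup>+t. ennreal (G (card I) t) * ennreal (qf (card I - 1) t) \<partial>lborel) = ennreal \<gamma>"
    unfolding I(4) \<gamma>_def using d by (intro gam_hk) auto
  have Jeq: "(\<integral>\<^sup>+t. ennreal (qf (card I - 1) t) \<partial>lborel) = ennreal (2 * A)"
    unfolding I(4) A_def by (rule j_hk)
  define e where "e = enn2real (emeasure (U \<Otimes>\<^sub>M U) Es)"
  define v where "v = enn2real (V I)"
  define vk where "vk = enn2real (V (I - {0}))"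
  have v: "v > 0" unfolding v_def using V_pos[OF I(1)] V_finite[OF I(1)] by (simp add: enn2real_positive_iff)
  have vk: "vk > 0" unfolding vk_def using V_pos[of "I - {0}"] V_finite[of "I - {0}"] I(1) by (simp add: enn2real_positive_iff)
  have E1: "e * (v * v) = 2 * (v * (vk * \<gamma>))"
    using arg_cong[OF w_gen[OF I(1-3), folded Bs_def, folded Es_def U_def], of enn2real]
    unfolding Gam e_def v_def vk_def enn2real_mult using g0 by simp
  have vv: "v = vk * (2 * A)"
    using arg_cong[OF VI_slice[OF I(1-3)], of enn2real] unfolding Jeq v_def vk_def enn2real_mult using A0 by simp
  have "v * (e * v) = v * (2 * (vk * \<gamma>))" using E1 by (simp only: mult.assoc mult.commute mult.left_commute)
  then have h1: "e * v = 2 * (vk * \<gamma>)" using v by simp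
  have "vk * (2 * (e * A)) = vk * (2 * \<gamma>)" using h1 unfolding vv by (simp only: mult.assoc mult.commute mult.left_commute)
  then have "e * A = \<gamma>" using vk by simp
  moreover have "A \<noteq> 0" using vv v by auto
  ultimately have "e = \<gamma> / A" by (simp add: field_simps)
  then show ?thesis unfolding wE e_def[symmetric] \<gamma>_def A_def .
qed

theorem mainTheorem4:
  shows "\<exists>g :: nat \<Rightarrow> real. g \<in> o(\<lambda>d. real d) \<and>
           (\<forall>\<^sub>F d in at_top. w d - w (Suc d) \<ge> real d powr (- (real d + g d) / 2))"
proof (intro exI conjI)
  show "(\<lambda>_. 0) \<in> o(\<lambda>d. real d)" by simp
  show "\<forall>\<^sub>F d in at_top. w d - w (Suc d) \<ge> real d powr (- (real d + 0) / 2)"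
    unfolding eventually_at_top_linorder
  proof (intro exI allI impI)
    fix d :: nat assume d: "256 \<le> d"
    have "(1/4)^d / 32 \<le> w d - w (Suc d)"
      using RA[of d] d by (simp add: w_formula)
    moreover have "real d powr (- (real d + 0) / 2) \<le> (1/4)^d / 32"
    proof -
      have "(256::real) powr (real d / 2) = 16 ^ d"
      proof -
        have "(256::real) = 16 powr 2" by simp
        then have "(256::real) powr (real d / 2) = 16 powr (2 * (real d / 2))" by (simp add: powr_powr)
        also have "\<dots> = 16 powr (real d)" by simp
        also have "\<dots> = 16 ^ d" by (simp add: powr_realpow)
        finally show ?thesis .
      qed
      moreover have "(256::real) powr (real d / 2) \<le> real d powr (real d / 2)"
        using d by (intro powr_mono2) auto
      ultimately have h: "16 ^ d \<le> real d powr (real d / 2)" by simp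
      have "(32::real) * 4 ^ d \<le> 4 ^ d * 4 ^ d"
      proof -
        have "(32::real) \<le> 4 ^ 3" by simp
        also have "\<dots> \<le> 4 ^ d" using d by (intro power_increasing) auto
        finally show ?thesis by simp
      qed
      also have "\<dots> = 16 ^ d" by (simp add: power_mult_distrib[symmetric])
      finally have h2: "32 * 4 ^ d \<le> real d powr (real d / 2)" using h by simp
      have "real d powr (- (real d + 0) / 2) = inverse (real d powr (real d / 2))"
        by (simp add: powr_minus[symmetric])
      also have "\<dots> \<le> inverse (32 * 4 ^ d)" using h2 by (intro le_imp_inverse_le) auto
      also have "\<dots> = (1/4)^d / 32" by (simp add: power_one_over field_simps)
      finally show ?thesis .
    qed
    ultimately show "real d powr (- (real d + 0) / 2) \<le> w d - w (Suc d)" by linarith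
  qed
qed

end
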